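(* For every $\gamma\in[0,1)$, with $\tau_\gamma$ and $Y^*_\gamma$ as described below, $\mathcal R(\gamma)=\mathbf E\big(Z\mid Y^*_\gamma\neq 0\big)$, where $Z:=\min(\eta(X),1-\eta(X))=\frac{p_1f_1\wedge p_2f_2}{p_1f_1+p_2f_2}(X)$; equivalently, $\mathcal R(\gamma)$ is the conditional expectation of $Z$ given that $Z<1-\tau_\gamma$ or that $X$ lies in the part of the boundary $\{Z=1-\tau_\gamma\}$ on which a decision is made. Moreover, the map $\gamma\mapsto\mathcal R(\gamma)$ is continuous and non-increasing on $[0,1)$.
   Context: Setup (binary classification with indecisions). $(\mathcal X,\mathcal U)$ is a measurable space with a $\sigma$-finite measure $\mu$; $P_1\neq P_2$ are probability measures with densities $f_1,f_2$ with respect to $\mu$; $p_1,p_2>0$, $p_1+p_2=1$; $\mathbf P(Y=i)=p_i$ and given $Y=i$, $X\sim P_i$. A classifier is a measurable $\tilde Y(X,U)\in\{0,1,2\}$ with $U\sim\mathrm{Unif}[0,1]$ independent of $(X,Y)$; $0$ means indecision. $\eta(x)=\frac{p_1f_1(x)}{p_1f_1(x)+p_2f_2(x)}$. $\mathcal R(\gamma):=\inf\mathbf P(\tilde Y\neq Y\mid\tilde Y\neq0)$ over classifiers with $\mathbf P(\tilde Y=0)=\gamma$. The oracle classifier $Y^*_\gamma$: for a threshold $\tau_\gamma\in[1/2,1]$, $\mathbf P(Y^*_\gamma=0)=\gamma$, a.s. $\{1-\tau_\gamma<\eta(X)<\tau_\gamma\}\subset\{Y^*_\gamma=0\}\subset\{1-\tau_\gamma\le\eta(X)\le\tau_\gamma\}$,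 and $Y^*_\gamma=\arg\max_{i\in\{1,2\}}p_if_i(X)$ on $\{Y^*_\gamma\ne0\}$; such a classifier attains $\mathcal R(\gamma)$. *)

theory Defs
  imports "HOL-Analysis.Analysis"
begin

definition eta :: "real \<Rightarrow> real \<Rightarrow> ('a \<Rightarrow> real) \<Rightarrow> ('a \<Rightarrow> real) \<Rightarrow> 'a \<Rightarrow> real" where
  "eta p1 p2 f1 f2 x = p1 * f1 x / (p1 * f1 x + p2 * f2 x)"

definition Zfun :: "real \<Rightarrow> real \<Rightarrow> ('a \<Rightarrow> real) \<Rightarrow> ('a \<Rightarrow> real) \<Rightarrow> 'a \<Rightarrow> real" where
  "Zfun p1 p2 f1 f2 x = min (eta p1 p2 f1 f2 x) (1 - eta p1 p2 f1 f2 x)"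

text \<open>Joint law of (Y, X, U): Y in {1,2} with P(Y=i) = p_i, X given Y=i has density f_i
  w.r.t. M, and U uniform on [0,1] independent of (X,Y).\<close>
definition joint :: "'a measure \<Rightarrow> real \<Rightarrow> real \<Rightarrow> ('a \<Rightarrow> real) \<Rightarrow> ('a \<Rightarrow> real)
    \<Rightarrow> (nat \<times> 'a \<times> real) measure" where
  "joint M p1 p2 f1 f2 =
     density (count_space {1, 2} \<Otimes>\<^sub>M (M \<Otimes>\<^sub>M lborel))
       (\<lambda>(i, x, u). ennreal ((if i = 1 then p1 * f1 x else p2 * f2 x) * indicator {0..1} u))"

text \<open>A (randomized) classifier: measurable function of (X,U) with values in {0,1,2};
  the value 0 means indecision.\<close>
definition classifier :: "'a measure \<Rightarrow> ('a \<Rightarrow> real \<Rightarrow> nat) \<Rightarrow> bool" where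
  "classifier M g \<longleftrightarrow>
     (\<lambda>(x, u). g x u) \<in> (M \<Otimes>\<^sub>M borel) \<rightarrow>\<^sub>M count_space UNIV \<and> (\<forall>x u. g x u \<in> {0, 1, 2})"

definition indecision_prob :: "(nat \<times> 'a \<times> real) measure \<Rightarrow> ('a \<Rightarrow> real \<Rightarrow> nat) \<Rightarrow> real" where
  "indecision_prob J g = measure J {(i, x, u) \<in> space J. g x u = 0}"

definition cond_error :: "(nat \<times> 'a \<times> real) measure \<Rightarrow> ('a \<Rightarrow> real \<Rightarrow> nat) \<Rightarrow> real" where
  "cond_error J g =
     measure J {(i, x, u) \<in> space J. g x u \<noteq> 0 \<and> g x u \<noteq> i}
     / measure J {(i, x, u) \<in> space J. g x u \<noteq> 0}"

definition Rrisk :: "'a measure \<Rightarrow> real \<Rightarrow> real \<Rightarrow> ('a \<Rightarrow> real) \<Rightarrow> ('a \<Rightarrow> real) \<Rightarrow> real \<Rightarrow> real" where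
  "Rrisk M p1 p2 f1 f2 \<gamma> =
     Inf {cond_error (joint M p1 p2 f1 f2) g | g. classifier M g \<and>
            indecision_prob (joint M p1 p2 f1 f2) g = \<gamma>}"

definition is_oracle :: "'a measure \<Rightarrow> real \<Rightarrow> real \<Rightarrow> ('a \<Rightarrow> real) \<Rightarrow> ('a \<Rightarrow> real)
    \<Rightarrow> real \<Rightarrow> real \<Rightarrow> ('a \<Rightarrow> real \<Rightarrow> nat) \<Rightarrow> bool" where
  "is_oracle M p1 p2 f1 f2 \<gamma> \<tau> g \<longleftrightarrow>
     classifier M g \<and> 1/2 \<le> \<tau> \<and> \<tau> \<le> 1 \<and>
     indecision_prob (joint M p1 p2 f1 f2) g = \<gamma> \<and>
     (AE (i, x, u) in joint M p1 p2 f1 f2.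
        (1 - \<tau> < eta p1 p2 f1 f2 x \<and> eta p1 p2 f1 f2 x < \<tau> \<longrightarrow> g x u = 0) \<and>
        (g x u = 0 \<longrightarrow> 1 - \<tau> \<le> eta p1 p2 f1 f2 x \<and> eta p1 p2 f1 f2 x \<le> \<tau>) \<and>
        (g x u = 1 \<longrightarrow> p1 * f1 x \<ge> p2 * f2 x) \<and>
        (g x u = 2 \<longrightarrow> p2 * f2 x \<ge> p1 * f1 x))"

definition cond_exp_Z :: "'a measure \<Rightarrow> real \<Rightarrow> real \<Rightarrow> ('a \<Rightarrow> real) \<Rightarrow> ('a \<Rightarrow> real)
    \<Rightarrow> ('a \<Rightarrow> real \<Rightarrow> nat) \<Rightarrow> real" where
  "cond_exp_Z M p1 p2 f1 f2 g =
     (\<integral>\<omega>. Zfun p1 p2 f1 f2 (fst (snd \<omega>)) *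
            indicator {(i, x, u). g x u \<noteq> 0} \<omega> \<partial>joint M p1 p2 f1 f2)
     / measure (joint M p1 p2 f1 f2) {(i, x, u) \<in> space (joint M p1 p2 f1 f2). g x u \<noteq> 0}"

end

theory Submission
  imports Defs "HOL-Probability.Probability_Measure"
begin
locale S =
  fixes M :: "'a measure" and f1 f2 :: "'a \<Rightarrow> real" and p1 p2 :: real
  assumes sfM: "sigma_finite_measure M"
    and f1m[measurable]: "f1 \<in> borel_measurable M" and f2m[measurable]: "f2 \<in> borel_measurable M"
    and f1p: "\<And>x. x \<in> space M \<Longrightarrow> 0 \<le> f1 x" and f2p: "\<And>x. x \<in> space M \<Longrightarrow> 0 \<le> f2 x"
    and f1i: "(\<integral>\<^sup>+ x. ennreal (f1 x) \<partial>M) = 1" and f2i: "(\<integral>\<^sup>+ x. ennreal (f2 x) \<partial>M) = 1"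
    and p1: "0 < p1" and p2: "0 < p2" and p12: "p1 + p2 = 1"
begin

abbreviation "J \<equiv> joint M p1 p2 f1 f2"
abbreviation "N \<equiv> M \<Otimes>\<^sub>M (lborel :: real measure)"
abbreviation "CN \<equiv> count_space {1::nat,2} \<Otimes>\<^sub>M N"
definition "ind (u::real) = (indicator {0..1} u :: real)"
definition "W i x u = (if i = (1::nat) then p1 * f1 x else p2 * f2 x) * ind u"
definition "w i x u = ennreal (W i x u)"

lemma sfN: "sigma_finite_measure N"
  by (intro sigma_finite_pair_measure sfM) (simp add: lborel.sigma_finite_measure_axioms)

lemma ind_meas[measurable]: "ind \<in> borel_measurable borel"
  unfolding ind_def[abs_def] by (intro borel_measurable_indicator borel_closed closed_atLeastAtMost)

lemma ind_meas2[measurable]: "ind \<in> borel_measurable lborel"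
  by (simp only: measurable_lborel2) (rule ind_meas)

lemma w_meas[measurable]: "(\<lambda>(i,x,u). w i x u) \<in> borel_measurable (count_space {1,2} \<Otimes>\<^sub>M N)"
  unfolding w_def W_def by measurable

lemma joint_eq: "J = density (count_space {1,2} \<Otimes>\<^sub>M N) (\<lambda>(i,x,u). w i x u)"
  unfolding joint_def w_def W_def ind_def by (simp add: case_prod_beta')

lemma space_J: "space J = {1,2} \<times> (space M \<times> UNIV)"
  by (simp add: joint_def space_pair_measure)

lemma sets_J[measurable_cong]: "sets J = sets (count_space {1,2} \<Otimes>\<^sub>M N)"
  by (simp only: joint_eq sets_density)

lemma D1:
  assumes [measurable]: "F \<in> borel_measurable (count_space {1,2} \<Otimes>\<^sub>M N)"
  shows "(\<integral>\<^sup>+ \<omega>. F \<omega> \<partial>J) = (\<Sum>i\<in>{1,2}. \<integral>\<^sup>+ z. w i (fst z) (snd z) * F (i, z) \<partial>N)"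
proof -
  interpret N: sigma_finite_measure N by (rule sfN)
  have "(\<integral>\<^sup>+ \<omega>. F \<omega> \<partial>J) = (\<integral>\<^sup>+ \<omega>. (\<lambda>(i,x,u). w i x u) \<omega> * F \<omega> \<partial>(count_space {1,2} \<Otimes>\<^sub>M N))"
    unfolding joint_eq by (rule nn_integral_density) measurable
  also have "\<dots> = (\<integral>\<^sup>+ i. \<integral>\<^sup>+ z. (\<lambda>(i,x,u). w i x u) (i,z) * F (i,z) \<partial>N \<partial>count_space {1,2})"
    by (rule N.nn_integral_fst[symmetric]) measurable
  also have "\<dots> = (\<Sum>i\<in>{1,2}. \<integral>\<^sup>+ z. w i (fst z) (snd z) * F (i, z) \<partial>N)"
    by (subst nn_integral_count_space_finite) (auto simp: split_beta')
  finally show ?thesis .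
qed

lemma W_meas[measurable]: "(\<lambda>(i,x,u). W i x u) \<in> borel_measurable (count_space {1,2} \<Otimes>\<^sub>M N)"
  unfolding W_def by measurable

lemma ind_nonneg: "0 \<le> ind u" by (simp add: ind_def)

lemma W_nonneg: "x \<in> space M \<Longrightarrow> 0 \<le> W i x u"
  unfolding W_def using f1p[of x] f2p[of x] p1 p2 ind_nonneg[of u] by auto

lemma D1':
  assumes [measurable]: "G \<in> borel_measurable (count_space {1,2} \<Otimes>\<^sub>M N)"
    and Gp: "\<And>i x u. x \<in> space M \<Longrightarrow> 0 \<le> G (i,x,u)"
  shows "(\<integral>\<^sup>+ \<omega>. ennreal (G \<omega>) \<partial>J) =
    (\<integral>\<^sup>+ z. ennreal (W 1 (fst z) (snd z) * G (1,z) + W 2 (fst z) (snd z) * G (2,z)) \<partial>N)"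
proof -
  have pr: "(\<lambda>z. (i, z)) \<in> N \<rightarrow>\<^sub>M count_space {1,2} \<Otimes>\<^sub>M N" if "i \<in> {1,2}" for i
    using that by (intro measurable_Pair measurable_const measurable_ident_sets) auto
  have m1: "(\<lambda>z. w i (fst z) (snd z) * ennreal (G (i, z))) \<in> borel_measurable N" if "i \<in> {1,2}" for i
  proof -
    have a: "(\<lambda>z. (\<lambda>(i,x,u). w i x u) (i,z)) \<in> borel_measurable N"
      by (rule measurable_compose[OF pr[OF that] w_meas])
    have b: "(\<lambda>z. G (i,z)) \<in> borel_measurable N"
      by (rule measurable_compose[OF pr[OF that] assms(1)])
    show ?thesis using borel_measurable_times_ennreal[OF a measurable_compose[OF b measurable_ennreal]]
      by (simp add: case_prod_beta)
  qed
  have "(\<integral>\<^sup>+ \<omega>. ennreal (G \<omega>) \<partial>J) = (\<Sum>i\<in>{1,2}. \<integral>\<^sup>+ z. w i (fst z) (snd z) * ennreal (G (i, z)) \<partial>N)"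
    by (rule D1) measurable
  also have "\<dots> = (\<integral>\<^sup>+ z. w 1 (fst z) (snd z) * ennreal (G (1, z)) \<partial>N) + (\<integral>\<^sup>+ z. w 2 (fst z) (snd z) * ennreal (G (2, z)) \<partial>N)"
    by simp
  also have "\<dots> = (\<integral>\<^sup>+ z. w 1 (fst z) (snd z) * ennreal (G (1, z)) + w 2 (fst z) (snd z) * ennreal (G (2, z)) \<partial>N)"
    by (rule nn_integral_add[symmetric]) (use m1 in auto)
  also have "\<dots> = (\<integral>\<^sup>+ z. ennreal (W 1 (fst z) (snd z) * G (1,z) + W 2 (fst z) (snd z) * G (2,z)) \<partial>N)"
  proof (intro nn_integral_cong)
    fix z :: "'a \<times> real" assume "z \<in> space N"
    then have x: "fst z \<in> space M" by (auto simp: space_pair_measure)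
    have a: "0 \<le> W i (fst z) (snd z)" "0 \<le> G (i, z)" for i
      using W_nonneg[OF x] Gp[OF x, of i "snd z"] by auto
    show "w 1 (fst z) (snd z) * ennreal (G (1, z)) + w 2 (fst z) (snd z) * ennreal (G (2, z)) =
      ennreal (W 1 (fst z) (snd z) * G (1,z) + W 2 (fst z) (snd z) * G (2,z))"
    proof -
      have e1: "ennreal (W 1 (fst z) (snd z) * G (1,z) + W 2 (fst z) (snd z) * G (2,z)) =
          ennreal (W 1 (fst z) (snd z) * G (1,z)) + ennreal (W 2 (fst z) (snd z) * G (2,z))"
        by (rule ennreal_plus) (use a in auto)
      have e2: "ennreal (W i (fst z) (snd z) * G (i,z)) = ennreal (W i (fst z) (snd z)) * ennreal (G (i,z))" for i
        by (rule ennreal_mult) (use a in auto)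
      show ?thesis unfolding e1 e2 w_def ..
    qed
  qed
  finally show ?thesis .
qed

lemma D2:
  assumes [measurable]: "A \<in> borel_measurable M" "B \<in> borel_measurable borel"
  shows "(\<integral>\<^sup>+ z. A (fst z) * B (snd z) \<partial>N) = (\<integral>\<^sup>+ x. A x \<partial>M) * (\<integral>\<^sup>+ u. B u \<partial>lborel)"
proof -
  have "(\<integral>\<^sup>+ z. A (fst z) * B (snd z) \<partial>N) = (\<integral>\<^sup>+ x. \<integral>\<^sup>+ u. A x * B u \<partial>lborel \<partial>M)"
    using sigma_finite_measure.nn_integral_fst[OF lborel.sigma_finite_measure_axioms, of "\<lambda>z. A (fst z) * B (snd z)" M]
    by simp
  also have "\<dots> = (\<integral>\<^sup>+ x. A x * (\<integral>\<^sup>+ u. B u \<partial>lborel) \<partial>M)"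
    by (rule nn_integral_cong) (simp add: nn_integral_cmult)
  also have "\<dots> = (\<integral>\<^sup>+ x. A x \<partial>M) * (\<integral>\<^sup>+ u. B u \<partial>lborel)"
    by (rule nn_integral_multc) measurable
  finally show ?thesis .
qed

abbreviation "et \<equiv> eta p1 p2 f1 f2"
abbreviation "Zf \<equiv> Zfun p1 p2 f1 f2"
definition "h x = p1 * f1 x + p2 * f2 x"

lemma eta_meas[measurable]: "et \<in> borel_measurable M"
  unfolding eta_def[abs_def] by measurable
lemma Z_meas[measurable]: "Zf \<in> borel_measurable M"
  unfolding Zfun_def[abs_def] by measurable
lemma h_meas[measurable]: "h \<in> borel_measurable M"
  unfolding h_def[abs_def] by measurable

lemma h_nonneg: "x \<in> space M \<Longrightarrow> 0 \<le> h x"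
  unfolding h_def using f1p[of x] f2p[of x] p1 p2 by simp

lemma eta_h: assumes "x \<in> space M"
  shows "p1 * f1 x = et x * h x" "p2 * f2 x = (1 - et x) * h x"
proof -
  have a: "0 \<le> p1 * f1 x" "0 \<le> p2 * f2 x" using f1p[OF assms] f2p[OF assms] p1 p2 by simp_all
  have "p1 * f1 x = et x * h x \<and> p2 * f2 x = (1 - et x) * h x"
  proof (cases "h x = 0")
    case True
    then have "p1 * f1 x = 0" "p2 * f2 x = 0" using a unfolding h_def by linarith+
    then show ?thesis using True by simp
  next
    case False
    then show ?thesis
      unfolding eta_def using False by (simp add: field_simps h_def)
  qed
  then show "p1 * f1 x = et x * h x" "p2 * f2 x = (1 - et x) * h x" by auto
qed

lemma eta01: assumes "x \<in> space M" shows "0 \<le> et x" "et x \<le> 1"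
proof -
  have a: "0 \<le> p1 * f1 x" "0 \<le> p2 * f2 x" using f1p[OF assms] f2p[OF assms] p1 p2 by simp_all
  show "0 \<le> et x" unfolding eta_def using a by simp
  show "et x \<le> 1" unfolding eta_def using a
    by (cases "p1 * f1 x + p2 * f2 x = 0") (auto simp: divide_le_eq_1)
qed

lemma Z01: "x \<in> space M \<Longrightarrow> 0 \<le> Zf x"
  unfolding Zfun_def using eta01[of x] by auto

lemma Z_half: "Zf x \<le> 1/2"
  unfolding Zfun_def by (simp add: min_def)

lemma prob_J: "prob_space J"
proof (rule prob_spaceI)
  have "emeasure J (space J) = (\<integral>\<^sup>+ \<omega>. ennreal 1 \<partial>J)" by (simp add: nn_integral_const)
  also have "\<dots> = (\<integral>\<^sup>+ z. ennreal (W 1 (fst z) (snd z) * 1 + W 2 (fst z) (snd z) * 1) \<partial>N)"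
    using D1'[of "\<lambda>_. 1"] by (simp del: One_nat_def)
  also have "\<dots> = (\<integral>\<^sup>+ z. ennreal (h (fst z)) * ennreal (ind (snd z)) \<partial>N)"
  proof (intro nn_integral_cong)
    fix z :: "'a \<times> real" assume "z \<in> space N"
    then have x: "fst z \<in> space M" by (auto simp: space_pair_measure)
    have "W 1 (fst z) (snd z) * 1 + W 2 (fst z) (snd z) * 1 = h (fst z) * ind (snd z)"
      by (simp add: W_def h_def algebra_simps)
    then show "ennreal (W 1 (fst z) (snd z) * 1 + W 2 (fst z) (snd z) * 1) = ennreal (h (fst z)) * ennreal (ind (snd z))"
      using ennreal_mult[OF h_nonneg[OF x] ind_nonneg] by simp
  qed
  also have "\<dots> = (\<integral>\<^sup>+ x. ennreal (h x) \<partial>M) * (\<integral>\<^sup>+ u. ennreal (ind u) \<partial>lborel)"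
    by (rule D2) measurable
  also have "(\<integral>\<^sup>+ x. ennreal (h x) \<partial>M) = 1"
  proof -
    have "(\<integral>\<^sup>+ x. ennreal (h x) \<partial>M) = (\<integral>\<^sup>+ x. ennreal p1 * ennreal (f1 x) + ennreal p2 * ennreal (f2 x) \<partial>M)"
      using p1 p2 f1p f2p
      by (intro nn_integral_cong) (simp add: h_def ennreal_mult[symmetric] ennreal_plus[symmetric] del: ennreal_plus)
    also have "\<dots> = ennreal p1 * (\<integral>\<^sup>+ x. ennreal (f1 x) \<partial>M) + ennreal p2 * (\<integral>\<^sup>+ x. ennreal (f2 x) \<partial>M)"
      by (simp add: nn_integral_add nn_integral_cmult)
    also have "\<dots> = 1" using p1 p2 p12 by (simp add: f1i f2i ennreal_plus[symmetric] del: ennreal_plus)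
    finally show ?thesis .
  qed
  also have "(\<integral>\<^sup>+ u. ennreal (ind u) \<partial>lborel) = 1"
    by (simp add: ennreal_indicator ind_def)
  finally show "emeasure J (space J) = 1" by simp
qed

interpretation PJ: prob_space J by (rule prob_J)

definition "G g \<omega> = g (fst (snd \<omega>)) (snd (snd \<omega>))"

lemma G_meas:
  assumes "classifier M g"
  shows "G g \<in> count_space {1,2} \<Otimes>\<^sub>M N \<rightarrow>\<^sub>M count_space UNIV"
proof -
  have "(\<lambda>(x, u). g x u) \<in> M \<Otimes>\<^sub>M borel \<rightarrow>\<^sub>M count_space UNIV"
    using assms unfolding classifier_def by blast
  moreover have "sets N = sets (M \<Otimes>\<^sub>M borel)" by (intro sets_pair_measure_cong) auto
  ultimately have "(\<lambda>(x, u). g x u) \<in> N \<rightarrow>\<^sub>M count_space UNIV"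
    using measurable_cong_sets[of N "M \<Otimes>\<^sub>M borel" "count_space UNIV" "count_space UNIV"] by simp
  then have "(\<lambda>(x, u). g x u) \<circ> snd \<in> count_space {1,2} \<Otimes>\<^sub>M N \<rightarrow>\<^sub>M count_space UNIV"
    by (intro measurable_comp[OF measurable_snd])
  then show ?thesis unfolding G_def o_def by (simp add: case_prod_beta)
qed

lemma G_range: "classifier M g \<Longrightarrow> G g \<omega> \<in> {0,1,2}"
  unfolding classifier_def G_def by blast

definition "DD g = {(i::nat, x, u) \<in> space J. g x u \<noteq> 0}"
definition "EE g = {(i::nat, x, u) \<in> space J. g x u \<noteq> 0 \<and> g x u \<noteq> i}"
definition "Z0 g = {(i::nat, x, u) \<in> space J. g x u = 0}"

lemma DD_alt: "DD g = {\<omega> \<in> space J. G g \<omega> \<noteq> 0}"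
  unfolding DD_def G_def by auto
lemma Z0_alt: "Z0 g = {\<omega> \<in> space J. G g \<omega> = 0}"
  unfolding Z0_def G_def by auto
lemma EE_alt: "EE g = DD g \<inter> ({\<omega> \<in> space J. fst \<omega> = 1 \<and> G g \<omega> \<noteq> 1} \<union> {\<omega> \<in> space J. fst \<omega> = 2 \<and> G g \<omega> \<noteq> 2})"
  unfolding EE_def DD_def G_def space_J by auto

lemma fst_meas[measurable]: "(fst :: nat \<times> 'a \<times> real \<Rightarrow> nat) \<in> count_space {1,2} \<Otimes>\<^sub>M N \<rightarrow>\<^sub>M count_space UNIV"
proof -
  have "(\<lambda>i::nat. i) \<in> count_space {1,2} \<rightarrow>\<^sub>M count_space UNIV" by (simp add: measurable_count_space_eq1)
  then show ?thesis using measurable_compose[OF measurable_fst] by blast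
qed

lemma sets_DEZ:
  assumes "classifier M g"
  shows "DD g \<in> sets J" "EE g \<in> sets J" "Z0 g \<in> sets J"
proof -
  note [measurable] = G_meas[OF assms]
  show "DD g \<in> sets J" unfolding DD_alt by measurable
  show "Z0 g \<in> sets J" unfolding Z0_alt by measurable
  have "{\<omega> \<in> space J. fst \<omega> = 1 \<and> G g \<omega> \<noteq> 1} \<in> sets J" by measurable
  moreover have "{\<omega> \<in> space J. fst \<omega> = 2 \<and> G g \<omega> \<noteq> 2} \<in> sets J" by measurable
  moreover have "DD g \<in> sets J" unfolding DD_alt by measurable
  ultimately show "EE g \<in> sets J" unfolding EE_alt by (intro sets.Int sets.Un)
qed

lemma DD_compl: "DD g = space J - Z0 g"
  unfolding DD_def Z0_def by auto

lemma measure_DD: "classifier M g \<Longrightarrow> measure J (DD g) = 1 - indecision_prob J g"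
  unfolding indecision_prob_def Z0_def[symmetric] DD_compl
  by (rule PJ.prob_compl) (rule sets_DEZ(3))

lemma integ_bound:
  fixes f :: "nat \<times> 'a \<times> real \<Rightarrow> real"
  assumes "f \<in> borel_measurable J" "\<And>\<omega>. \<omega> \<in> space J \<Longrightarrow> \<bar>f \<omega>\<bar> \<le> B"
  shows "integrable J f"
proof (rule PJ.integrable_const_bound)
  show "AE x in J. norm (f x) \<le> B" using assms(2) by (auto intro: AE_I2)
qed (rule assms(1))

lemma ind_Ind: "indicator {(i, x, u). g x u \<noteq> 0} \<omega> = (if G g \<omega> \<noteq> 0 then 1 else (0::real))"
  by (cases \<omega>) (auto simp: G_def indicator_def)

definition "e g \<omega> = (if G g \<omega> = 1 then 1 - et (fst (snd \<omega>)) else et (fst (snd \<omega>)))"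

definition "A g = (\<integral>\<omega>. Zf (fst (snd \<omega>)) * indicator {(i, x, u). g x u \<noteq> 0} \<omega> \<partial>J)"

lemma spJ: "\<omega> \<in> space J \<Longrightarrow> fst (snd \<omega>) \<in> space M"
  by (auto simp: space_J)

lemma meas_basic:
  assumes "classifier M g"
  shows "(\<lambda>\<omega>. Zf (fst (snd \<omega>)) * indicator {(i, x, u). g x u \<noteq> 0} \<omega>) \<in> borel_measurable J"
    "(\<lambda>\<omega>. e g \<omega> * indicator {(i, x, u). g x u \<noteq> 0} \<omega>) \<in> borel_measurable J"
    "(\<lambda>\<omega>. indicator {(i, x, u). g x u \<noteq> 0} \<omega> :: real) \<in> borel_measurable J"
proof -
  note [measurable] = G_meas[OF assms]
  show "(\<lambda>\<omega>. Zf (fst (snd \<omega>)) * indicator {(i, x, u). g x u \<noteq> 0} \<omega>) \<in> borel_measurable J"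
    unfolding ind_Ind by measurable
  show "(\<lambda>\<omega>. e g \<omega> * indicator {(i, x, u). g x u \<noteq> 0} \<omega>) \<in> borel_measurable J"
    unfolding ind_Ind e_def by measurable
  show "(\<lambda>\<omega>. indicator {(i, x, u). g x u \<noteq> 0} \<omega> :: real) \<in> borel_measurable J"
    unfolding ind_Ind by measurable
qed

lemma integ_basic:
  assumes "classifier M g"
  shows "integrable J (\<lambda>\<omega>. Zf (fst (snd \<omega>)) * indicator {(i, x, u). g x u \<noteq> 0} \<omega>)"
    "integrable J (\<lambda>\<omega>. e g \<omega> * indicator {(i, x, u). g x u \<noteq> 0} \<omega>)"
    "integrable J (\<lambda>\<omega>. indicator {(i, x, u). g x u \<noteq> 0} \<omega> :: real)"
proof -
  show "integrable J (\<lambda>\<omega>. Zf (fst (snd \<omega>)) * indicator {(i, x, u). g x u \<noteq> 0} \<omega>)"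
  proof (rule integ_bound[where B=1, OF meas_basic(1)[OF assms]])
    fix \<omega> assume "\<omega> \<in> space J"
    then have "0 \<le> Zf (fst (snd \<omega>))" "Zf (fst (snd \<omega>)) \<le> 1/2" using Z01 Z_half spJ by auto
    then show "\<bar>Zf (fst (snd \<omega>)) * indicator {(i, x, u). g x u \<noteq> 0} \<omega>\<bar> \<le> 1"
      by (auto simp: indicator_def)
  qed
  show "integrable J (\<lambda>\<omega>. e g \<omega> * indicator {(i, x, u). g x u \<noteq> 0} \<omega>)"
  proof (rule integ_bound[where B=1, OF meas_basic(2)[OF assms]])
    fix \<omega> assume "\<omega> \<in> space J"
    then have "0 \<le> et (fst (snd \<omega>))" "et (fst (snd \<omega>)) \<le> 1" using eta01 spJ by auto
    then show "\<bar>e g \<omega> * indicator {(i, x, u). g x u \<noteq> 0} \<omega>\<bar> \<le> 1"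
      by (auto simp: indicator_def e_def)
  qed
  show "integrable J (\<lambda>\<omega>. indicator {(i, x, u). g x u \<noteq> 0} \<omega> :: real)"
    using meas_basic(3)[OF assms] by (rule integ_bound[where B=1]) (simp add: indicator_def)
qed

lemma int_ind: "(\<integral>\<omega>. indicator {(i, x, u). g x u \<noteq> 0} \<omega> \<partial>J) = measure J (DD g)"
proof -
  have "{(i, x, u). g x u \<noteq> 0} \<inter> space J = DD g" unfolding DD_def by auto
  then show ?thesis by simp
qed

lemma pw_W: assumes "x \<in> space M"
  shows "W 1 x u = et x * (h x * ind u)" "W 2 x u = (1 - et x) * (h x * ind u)"
  using eta_h[OF assms] unfolding W_def by (simp_all add: mult.assoc)

lemma err_eq:
  assumes cl: "classifier M g"
  shows "measure J (EE g) = (\<integral>\<omega>. e g \<omega> * indicator {(i, x, u). g x u \<noteq> 0} \<omega> \<partial>J)"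
proof -
  note [measurable] = G_meas[OF cl]
  have EEs[measurable]: "EE g \<in> sets (CN)" using sets_DEZ(2)[OF cl] unfolding sets_J .
  have mE: "(\<lambda>\<omega>. indicator (EE g) \<omega> :: real) \<in> borel_measurable (CN)"
    by measurable
  have mF: "(\<lambda>\<omega>. e g \<omega> * indicator {(i, x, u). g x u \<noteq> 0} \<omega>) \<in> borel_measurable (CN)"
    using meas_basic(2)[OF cl] unfolding measurable_cong_sets[OF sets_J refl] .
  have s0: "measure J (EE g) = (\<integral>\<omega>. indicator (EE g) \<omega> \<partial>J)"
  proof -
    have "EE g \<inter> space J = EE g" unfolding EE_def by auto
    then show ?thesis by simp
  qed
  have s1: "(\<integral>\<omega>. indicator (EE g) \<omega> \<partial>J) = enn2real (\<integral>\<^sup>+\<omega>. ennreal (indicator (EE g) \<omega>) \<partial>J)"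
    by (rule integral_eq_nn_integral) (use mE in auto)
  have s2a: "(\<integral>\<^sup>+\<omega>. ennreal (indicator (EE g) \<omega>) \<partial>J) =
      (\<integral>\<^sup>+ z. ennreal (W 1 (fst z) (snd z) * indicator (EE g) (1::nat,z) + W 2 (fst z) (snd z) * indicator (EE g) (2::nat,z)) \<partial>N)"
    by (rule D1'[OF mE]) auto
  have s2b: "(\<integral>\<^sup>+ z. ennreal (W 1 (fst z) (snd z) * indicator (EE g) (1::nat,z) + W 2 (fst z) (snd z) * indicator (EE g) (2::nat,z)) \<partial>N)
     = (\<integral>\<^sup>+ z. ennreal (W 1 (fst z) (snd z) * (e g (1::nat,z) * indicator {(i, x, u). g x u \<noteq> 0} (1::nat,z)) +
        W 2 (fst z) (snd z) * (e g (2::nat,z) * indicator {(i, x, u). g x u \<noteq> 0} (2::nat,z))) \<partial>N)"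
  proof (intro nn_integral_cong arg_cong[where f=ennreal])
    fix z :: "'a \<times> real" assume "z \<in> space N"
    then have x: "fst z \<in> space M" by (auto simp: space_pair_measure)
    have r: "g (fst z) (snd z) \<in> {0,1,2}" using G_range[OF cl, of "(1, z)"] by (simp add: G_def)
    have in1: "(1::nat, z) \<in> space J" "(2::nat, z) \<in> space J" using x by (cases z, auto simp: space_J)+
    show "W 1 (fst z) (snd z) * indicator (EE g) (1::nat,z) + W 2 (fst z) (snd z) * indicator (EE g) (2::nat,z) =
      W 1 (fst z) (snd z) * (e g (1::nat,z) * indicator {(i, x, u). g x u \<noteq> 0} (1::nat,z)) +
      W 2 (fst z) (snd z) * (e g (2::nat,z) * indicator {(i, x, u). g x u \<noteq> 0} (2::nat,z))"
      using r in1 unfolding pw_W[OF x] e_def G_def EE_def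
      by (cases z) (auto simp: indicator_def algebra_simps)
  qed
  have s2c: "(\<integral>\<^sup>+\<omega>. ennreal (e g \<omega> * indicator {(i, x, u). g x u \<noteq> 0} \<omega>) \<partial>J) =
     (\<integral>\<^sup>+ z. ennreal (W 1 (fst z) (snd z) * (e g (1::nat,z) * indicator {(i, x, u). g x u \<noteq> 0} (1::nat,z)) +
        W 2 (fst z) (snd z) * (e g (2::nat,z) * indicator {(i, x, u). g x u \<noteq> 0} (2::nat,z))) \<partial>N)"
    by (rule D1'[OF mF]) (auto simp: e_def indicator_def G_def eta01)
  have s3: "(\<integral>\<omega>. e g \<omega> * indicator {(i, x, u). g x u \<noteq> 0} \<omega> \<partial>J) =
     enn2real (\<integral>\<^sup>+\<omega>. ennreal (e g \<omega> * indicator {(i, x, u). g x u \<noteq> 0} \<omega>) \<partial>J)"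
    by (rule integral_eq_nn_integral) (use meas_basic(2)[OF cl] in \<open>auto intro!: AE_I2 dest!: spJ simp: e_def indicator_def eta01\<close>)
  show ?thesis using s0 s1 s2a s2b s2c s3 by simp
qed

lemma zero_int:
  fixes F :: "'a \<times> real \<Rightarrow> real"
  assumes "\<And>z. z \<in> space N \<Longrightarrow> F z = 0"
  shows "(\<integral>\<^sup>+ z. ennreal (F z) \<partial>N) = 0"
proof -
  have "(\<integral>\<^sup>+ z. ennreal (F z) \<partial>N) = (\<integral>\<^sup>+ z. ennreal 0 \<partial>N)"
    using assms by (intro nn_integral_cong) simp
  then show ?thesis by simp
qed

lemma int_lin:
  assumes cl: "classifier M g"
  shows "(\<integral>\<omega>. Zf (fst (snd \<omega>)) * indicator {(i, x, u). g x u \<noteq> 0} \<omega> - c * indicator {(i, x, u). g x u \<noteq> 0} \<omega> \<partial>J)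
    = A g - c * measure J (DD g)"
  unfolding Bochner_Integration.integral_diff[OF integ_basic(1)[OF cl] integrable_mult_right[OF integ_basic(3)[OF cl]]]
    integral_mult_right_zero int_ind A_def ..

lemma ae_hpos: "AE \<omega> in J. 0 < h (fst (snd \<omega>))"
proof -
  define Nl where "Nl = {\<omega> \<in> space J. h (fst (snd \<omega>)) \<le> 0}"
  have Nls: "Nl \<in> sets J" unfolding Nl_def by measurable
  have NlC[measurable]: "Nl \<in> sets CN" using Nls unfolding sets_J .
  have mI: "(\<lambda>\<omega>. indicator Nl \<omega> :: real) \<in> borel_measurable CN" by measurable
  have s1: "emeasure J Nl = (\<integral>\<^sup>+\<omega>. ennreal (indicator Nl \<omega>) \<partial>J)"
    using Nls by (simp add: ennreal_indicator nn_integral_indicator)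
  have s2: "(\<integral>\<^sup>+\<omega>. ennreal (indicator Nl \<omega>) \<partial>J) = (\<integral>\<^sup>+ z. ennreal (W 1 (fst z) (snd z) * indicator Nl (1::nat,z) + W 2 (fst z) (snd z) * indicator Nl (2::nat,z)) \<partial>N)"
    by (rule D1'[OF mI]) auto
  have s3: "(\<integral>\<^sup>+ z. ennreal (W 1 (fst z) (snd z) * indicator Nl (1::nat,z) + W 2 (fst z) (snd z) * indicator Nl (2::nat,z)) \<partial>N) = 0"
  proof (rule zero_int)
    fix z :: "'a \<times> real" assume "z \<in> space N"
    then have x: "fst z \<in> space M" by (auto simp: space_pair_measure)
    show "W 1 (fst z) (snd z) * indicator Nl (1::nat,z) + W 2 (fst z) (snd z) * indicator Nl (2::nat,z) = 0"
    proof (cases "h (fst z) \<le> 0")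
      case True
      then have "h (fst z) = 0" using h_nonneg[OF x] by linarith
      then show ?thesis unfolding pw_W[OF x] by simp
    next
      case False
      then show ?thesis by (simp add: Nl_def indicator_def)
    qed
  qed
  have "emeasure J Nl = 0" using s1 s2 s3 by simp
  then have "Nl \<in> null_sets J" using Nls by (simp add: null_sets_def)
  then show ?thesis by (rule AE_I') (auto simp: Nl_def)
qed

lemma oracle_e:
  assumes orc: "is_oracle M p1 p2 f1 f2 \<gamma> \<tau> g"
  shows "AE \<omega> in J. e g \<omega> * indicator {(i, x, u). g x u \<noteq> 0} \<omega> = Zf (fst (snd \<omega>)) * indicator {(i, x, u). g x u \<noteq> 0} \<omega>"
proof -
  have cl: "classifier M g" using orc by (simp add: is_oracle_def)
  have ae0: "AE (i, x, u) in J.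
        (1 - \<tau> < et x \<and> et x < \<tau> \<longrightarrow> g x u = 0) \<and>
        (g x u = 0 \<longrightarrow> 1 - \<tau> \<le> et x \<and> et x \<le> \<tau>) \<and>
        (g x u = 1 \<longrightarrow> p1 * f1 x \<ge> p2 * f2 x) \<and>
        (g x u = 2 \<longrightarrow> p2 * f2 x \<ge> p1 * f1 x)"
    using orc by (simp add: is_oracle_def)
  have ae: "AE \<omega> in J. (G g \<omega> = 1 \<longrightarrow> p1 * f1 (fst (snd \<omega>)) \<ge> p2 * f2 (fst (snd \<omega>))) \<and>
     (G g \<omega> = 2 \<longrightarrow> p2 * f2 (fst (snd \<omega>)) \<ge> p1 * f1 (fst (snd \<omega>)))"
    by (rule eventually_mono[OF ae0]) (auto simp: G_def split: prod.splits)
  show ?thesis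
    using ae ae_hpos AE_space
  proof eventually_elim
    fix \<omega> assume a: "(G g \<omega> = 1 \<longrightarrow> p1 * f1 (fst (snd \<omega>)) \<ge> p2 * f2 (fst (snd \<omega>))) \<and>
     (G g \<omega> = 2 \<longrightarrow> p2 * f2 (fst (snd \<omega>)) \<ge> p1 * f1 (fst (snd \<omega>)))"
      and hp: "0 < h (fst (snd \<omega>))" and sp: "\<omega> \<in> space J"
    have x: "fst (snd \<omega>) \<in> space M" using spJ[OF sp] .
    have r: "G g \<omega> \<in> {0,1,2}" using G_range[OF cl] .
    note eh = eta_h[OF x]
    show "e g \<omega> * indicator {(i, x, u). g x u \<noteq> 0} \<omega> = Zf (fst (snd \<omega>)) * indicator {(i, x, u). g x u \<noteq> 0} \<omega>"
    proof (cases "G g \<omega> = 1")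
      case True
      then have "(1 - et (fst (snd \<omega>))) * h (fst (snd \<omega>)) \<le> et (fst (snd \<omega>)) * h (fst (snd \<omega>))"
        using a eh by simp
      then have "1 - et (fst (snd \<omega>)) \<le> et (fst (snd \<omega>))" using hp by (simp add: mult_le_cancel_right)
      then show ?thesis using True unfolding ind_Ind e_def Zfun_def by (simp add: min_def)
    next
      case False
      show ?thesis
      proof (cases "G g \<omega> = 2")
        case True
        then have "et (fst (snd \<omega>)) * h (fst (snd \<omega>)) \<le> (1 - et (fst (snd \<omega>))) * h (fst (snd \<omega>))"
          using a eh by simp
        then have "et (fst (snd \<omega>)) \<le> 1 - et (fst (snd \<omega>))" using hp by (simp add: mult_le_cancel_right)
        then show ?thesis using True unfolding ind_Ind e_def Zfun_def by (simp add: min_def)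
      next
        case False
        then have "G g \<omega> = 0" using r \<open>G g \<omega> \<noteq> 1\<close> by auto
        then show ?thesis unfolding ind_Ind by simp
      qed
    qed
  qed
qed

lemma pw_lag:
  fixes et \<tau> :: real and v0 v :: nat
  assumes "1 - \<tau> < et \<and> et < \<tau> \<longrightarrow> v0 = 0" "v0 = 0 \<longrightarrow> 1 - \<tau> \<le> et \<and> et \<le> \<tau>"
  shows "min et (1 - et) * (if v0 \<noteq> 0 then 1 else 0) - (1 - \<tau>) * (if v0 \<noteq> 0 then 1 else 0)
     \<le> min et (1 - et) * (if v \<noteq> 0 then 1 else 0) - (1 - \<tau>) * (if v \<noteq> 0 then 1 else 0)"
  using assms by (cases "v0 = 0"; cases "v = 0") (auto simp: min_def)

lemma lagrange:
  assumes orc: "is_oracle M p1 p2 f1 f2 \<gamma> \<tau> g0" and cl: "classifier M g"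
  shows "A g0 - (1 - \<tau>) * measure J (DD g0) \<le> A g - (1 - \<tau>) * measure J (DD g)"
proof -
  have cl0: "classifier M g0" using orc by (simp add: is_oracle_def)
  have ae0: "AE (i, x, u) in J.
        (1 - \<tau> < et x \<and> et x < \<tau> \<longrightarrow> g0 x u = 0) \<and>
        (g0 x u = 0 \<longrightarrow> 1 - \<tau> \<le> et x \<and> et x \<le> \<tau>) \<and>
        (g0 x u = 1 \<longrightarrow> p1 * f1 x \<ge> p2 * f2 x) \<and>
        (g0 x u = 2 \<longrightarrow> p2 * f2 x \<ge> p1 * f1 x)"
    using orc by (simp add: is_oracle_def)
  have ae: "AE \<omega> in J. (1 - \<tau> < et (fst (snd \<omega>)) \<and> et (fst (snd \<omega>)) < \<tau> \<longrightarrow> G g0 \<omega> = 0) \<and>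
        (G g0 \<omega> = 0 \<longrightarrow> 1 - \<tau> \<le> et (fst (snd \<omega>)) \<and> et (fst (snd \<omega>)) \<le> \<tau>)"
    by (rule eventually_mono[OF ae0]) (auto simp: G_def split: prod.splits)
  have "(\<integral>\<omega>. Zf (fst (snd \<omega>)) * indicator {(i, x, u). g0 x u \<noteq> 0} \<omega> - (1 - \<tau>) * indicator {(i, x, u). g0 x u \<noteq> 0} \<omega> \<partial>J)
     \<le> (\<integral>\<omega>. Zf (fst (snd \<omega>)) * indicator {(i, x, u). g x u \<noteq> 0} \<omega> - (1 - \<tau>) * indicator {(i, x, u). g x u \<noteq> 0} \<omega> \<partial>J)"
  proof (rule integral_mono_AE)
    show "integrable J (\<lambda>\<omega>. Zf (fst (snd \<omega>)) * indicator {(i, x, u). g0 x u \<noteq> 0} \<omega> - (1 - \<tau>) * indicator {(i, x, u). g0 x u \<noteq> 0} \<omega>)"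
      by (rule Bochner_Integration.integrable_diff[OF integ_basic(1)[OF cl0] integrable_mult_right[OF integ_basic(3)[OF cl0]]])
    show "integrable J (\<lambda>\<omega>. Zf (fst (snd \<omega>)) * indicator {(i, x, u). g x u \<noteq> 0} \<omega> - (1 - \<tau>) * indicator {(i, x, u). g x u \<noteq> 0} \<omega>)"
      by (rule Bochner_Integration.integrable_diff[OF integ_basic(1)[OF cl] integrable_mult_right[OF integ_basic(3)[OF cl]]])
    show "AE \<omega> in J. Zf (fst (snd \<omega>)) * indicator {(i, x, u). g0 x u \<noteq> 0} \<omega> - (1 - \<tau>) * indicator {(i, x, u). g0 x u \<noteq> 0} \<omega>
       \<le> Zf (fst (snd \<omega>)) * indicator {(i, x, u). g x u \<noteq> 0} \<omega> - (1 - \<tau>) * indicator {(i, x, u). g x u \<noteq> 0} \<omega>"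
      using ae
    proof eventually_elim
      fix \<omega> assume "(1 - \<tau> < et (fst (snd \<omega>)) \<and> et (fst (snd \<omega>)) < \<tau> \<longrightarrow> G g0 \<omega> = 0) \<and>
        (G g0 \<omega> = 0 \<longrightarrow> 1 - \<tau> \<le> et (fst (snd \<omega>)) \<and> et (fst (snd \<omega>)) \<le> \<tau>)"
      then show "Zf (fst (snd \<omega>)) * indicator {(i, x, u). g0 x u \<noteq> 0} \<omega> - (1 - \<tau>) * indicator {(i, x, u). g0 x u \<noteq> 0} \<omega>
       \<le> Zf (fst (snd \<omega>)) * indicator {(i, x, u). g x u \<noteq> 0} \<omega> - (1 - \<tau>) * indicator {(i, x, u). g x u \<noteq> 0} \<omega>"
        unfolding ind_Ind Zfun_def by (intro pw_lag) auto
    qed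
  qed
  then show ?thesis unfolding int_lin[OF cl] int_lin[OF cl0] .
qed

lemma Z_le_e:
  assumes cl: "classifier M g"
  shows "A g \<le> measure J (EE g)"
proof -
  have "A g \<le> (\<integral>\<omega>. e g \<omega> * indicator {(i, x, u). g x u \<noteq> 0} \<omega> \<partial>J)"
    unfolding A_def
  proof (rule integral_mono[OF integ_basic(1)[OF cl] integ_basic(2)[OF cl]])
    fix \<omega> assume "\<omega> \<in> space J"
    show "Zf (fst (snd \<omega>)) * indicator {(i, x, u). g x u \<noteq> 0} \<omega> \<le> e g \<omega> * indicator {(i, x, u). g x u \<noteq> 0} \<omega>"
      unfolding ind_Ind e_def Zfun_def by auto
  qed
  then show ?thesis using err_eq[OF cl] by simp
qed

lemma part1:
  assumes orc: "is_oracle M p1 p2 f1 f2 \<gamma> \<tau> g0" and g1: "\<gamma> < 1"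
  shows "Rrisk M p1 p2 f1 f2 \<gamma> = cond_exp_Z M p1 p2 f1 f2 g0"
    "cond_exp_Z M p1 p2 f1 f2 g0 = A g0 / (1 - \<gamma>)"
proof -
  have cl0: "classifier M g0" and ind0: "indecision_prob J g0 = \<gamma>"
    using orc by (simp_all add: is_oracle_def)
  have P0: "measure J (DD g0) = 1 - \<gamma>" using measure_DD[OF cl0] ind0 by simp
  have ce: "cond_exp_Z M p1 p2 f1 f2 g0 = A g0 / (1 - \<gamma>)"
    unfolding cond_exp_Z_def A_def using P0 by (simp add: DD_def)
  then show "cond_exp_Z M p1 p2 f1 f2 g0 = A g0 / (1 - \<gamma>)" .
  have EA0: "measure J (EE g0) = A g0"
    unfolding err_eq[OF cl0] A_def
    by (rule integral_cong_AE[OF meas_basic(2)[OF cl0] meas_basic(1)[OF cl0] oracle_e[OF orc]])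
  have ce0: "cond_error J g0 = A g0 / (1 - \<gamma>)"
    using EA0 P0 unfolding cond_error_def by (simp add: EE_def DD_def)
  show "Rrisk M p1 p2 f1 f2 \<gamma> = cond_exp_Z M p1 p2 f1 f2 g0"
    unfolding Rrisk_def
  proof (rule cInf_eq_minimum)
    show "cond_exp_Z M p1 p2 f1 f2 g0 \<in> {cond_error J g |g. classifier M g \<and> indecision_prob J g = \<gamma>}"
    proof -
      have "cond_exp_Z M p1 p2 f1 f2 g0 = cond_error J g0" using ce ce0 by simp
      then show ?thesis using cl0 ind0 by blast
    qed
  next
    fix y assume "y \<in> {cond_error J g |g. classifier M g \<and> indecision_prob J g = \<gamma>}"
    then obtain g where y: "y = cond_error J g" and cl: "classifier M g" and ind: "indecision_prob J g = \<gamma>"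
      by auto
    have P: "measure J (DD g) = 1 - \<gamma>" using measure_DD[OF cl] ind by simp
    have "A g0 \<le> A g" using lagrange[OF orc cl] P P0 by simp
    also have "\<dots> \<le> measure J (EE g)" by (rule Z_le_e[OF cl])
    finally have "A g0 / (1 - \<gamma>) \<le> measure J (EE g) / (1 - \<gamma>)"
      using g1 by (intro divide_right_mono) auto
    moreover have "y = measure J (EE g) / (1 - \<gamma>)"
      using y P unfolding cond_error_def by (simp add: EE_def DD_def)
    ultimately show "cond_exp_Z M p1 p2 f1 f2 g0 \<le> y" using ce by simp
  qed
qed

lemma rect:
  assumes B[measurable]: "B \<in> sets M" and C: "C \<in> sets borel"
  shows "emeasure J {\<omega> \<in> space J. fst (snd \<omega>) \<in> B \<and> snd (snd \<omega>) \<in> C} =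
    (\<integral>\<^sup>+ x. ennreal (h x * indicator B x) \<partial>M) * emeasure lborel (C \<inter> {0..1})"
proof -
  define S where "S = {\<omega> \<in> space J. fst (snd \<omega>) \<in> B \<and> snd (snd \<omega>) \<in> C}"
  have Cl[measurable]: "C \<in> sets lborel" using C by simp
  have Cb[measurable]: "C \<in> sets borel" using C by simp
  have SJ: "S \<in> sets J" unfolding S_def by measurable
  have SC[measurable]: "S \<in> sets CN" using SJ unfolding sets_J .
  have mI: "(\<lambda>\<omega>. indicator S \<omega> :: real) \<in> borel_measurable CN" by measurable
  have s1: "emeasure J S = (\<integral>\<^sup>+\<omega>. ennreal (indicator S \<omega>) \<partial>J)"
    using SJ by (simp add: ennreal_indicator nn_integral_indicator)
  have s2: "(\<integral>\<^sup>+\<omega>. ennreal (indicator S \<omega>) \<partial>J) = (\<integral>\<^sup>+ z. ennreal (W 1 (fst z) (snd z) * indicator S (1::nat,z) + W 2 (fst z) (snd z) * indicator S (2::nat,z)) \<partial>N)"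
    by (rule D1'[OF mI]) auto
  have s3: "(\<integral>\<^sup>+ z. ennreal (W 1 (fst z) (snd z) * indicator S (1::nat,z) + W 2 (fst z) (snd z) * indicator S (2::nat,z)) \<partial>N)
    = (\<integral>\<^sup>+ z. ennreal (h (fst z) * indicator B (fst z)) * ennreal (ind (snd z) * indicator C (snd z)) \<partial>N)"
  proof (rule nn_integral_cong)
    fix z :: "'a \<times> real" assume "z \<in> space N"
    then have x: "fst z \<in> space M" by (auto simp: space_pair_measure)
    have in1: "(1::nat, z) \<in> space J" "(2::nat, z) \<in> space J" using x by (cases z, auto simp: space_J)+
    have i1: "indicator S (1::nat, z) = indicator B (fst z) * (indicator C (snd z) :: real)"
      "indicator S (2::nat, z) = indicator B (fst z) * (indicator C (snd z) :: real)"
      using in1 by (auto simp: S_def indicator_def)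
    have "W 1 (fst z) (snd z) * indicator S (1::nat,z) + W 2 (fst z) (snd z) * indicator S (2::nat,z)
       = (h (fst z) * indicator B (fst z)) * (ind (snd z) * indicator C (snd z))"
      unfolding i1 pw_W[OF x] by (simp add: algebra_simps)
    then show "ennreal (W 1 (fst z) (snd z) * indicator S (1::nat,z) + W 2 (fst z) (snd z) * indicator S (2::nat,z))
      = ennreal (h (fst z) * indicator B (fst z)) * ennreal (ind (snd z) * indicator C (snd z))"
      using h_nonneg[OF x] ind_nonneg[of "snd z"] by (simp add: ennreal_mult)
  qed
  have s4: "(\<integral>\<^sup>+ z. ennreal (h (fst z) * indicator B (fst z)) * ennreal (ind (snd z) * indicator C (snd z)) \<partial>N)
     = (\<integral>\<^sup>+ x. ennreal (h x * indicator B x) \<partial>M) * (\<integral>\<^sup>+ u. ennreal (ind u * indicator C u) \<partial>lborel)"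
    by (rule D2) measurable
  have s5: "(\<integral>\<^sup>+ u. ennreal (ind u * indicator C u) \<partial>lborel) = emeasure lborel (C \<inter> {0..1})"
  proof -
    have "(\<integral>\<^sup>+ u. ennreal (ind u * indicator C u) \<partial>lborel) = (\<integral>\<^sup>+ u. indicator (C \<inter> {0..1}) u \<partial>lborel)"
      by (intro nn_integral_cong) (auto simp: ind_def indicator_def)
    also have "\<dots> = emeasure lborel (C \<inter> {0..1})"
      by (rule nn_integral_indicator) measurable
    finally show ?thesis .
  qed
  show ?thesis using s1 s2 s3 s4 s5 unfolding S_def by simp
qed

lemma zero_classifier: "classifier M (\<lambda>x u. 0::nat)" "A (\<lambda>x u. 0::nat) = 0" "measure J (DD (\<lambda>x u. 0::nat)) = 0"
proof -
  show "classifier M (\<lambda>x u. 0::nat)" by (auto simp: classifier_def)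
  show "A (\<lambda>x u. 0::nat) = 0" by (simp add: A_def ind_Ind G_def)
  have "DD (\<lambda>x u. 0::nat) = {}" unfolding DD_def by auto
  then show "measure J (DD (\<lambda>x u. 0::nat)) = 0" by simp
qed

lemma inv_mono: "m \<le> n \<Longrightarrow> inverse (real (Suc n)) \<le> inverse (real (Suc m))"
  by (rule le_imp_inverse_le) auto

definition "Zs t = {\<omega> \<in> space J. Zf (fst (snd \<omega>)) \<le> t}"
definition "Zl t = {\<omega> \<in> space J. Zf (fst (snd \<omega>)) < t}"
definition "Ze t = {\<omega> \<in> space J. Zf (fst (snd \<omega>)) = t}"

lemma Zs_sets[measurable]: "Zs t \<in> sets J"
  unfolding Zs_def by measurable
lemma Zl_sets[measurable]: "Zl t \<in> sets J"
  unfolding Zl_def by measurable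
lemma Ze_sets[measurable]: "Ze t \<in> sets J"
  unfolding Ze_def by measurable
lemmas Zsets = Zs_sets Zl_sets Ze_sets

lemma Zs_iff: "\<omega> \<in> Zs t \<longleftrightarrow> \<omega> \<in> space J \<and> Zf (fst (snd \<omega>)) \<le> t"
  by (simp add: Zs_def)
lemma Zl_iff: "\<omega> \<in> Zl t \<longleftrightarrow> \<omega> \<in> space J \<and> Zf (fst (snd \<omega>)) < t"
  by (simp add: Zl_def)

lemma Zs_decseq: "decseq (\<lambda>n. Zs (c + inverse (real (Suc n))))"
  unfolding decseq_def
proof (intro allI impI subsetI)
  fix m n :: nat and \<omega> assume "m \<le> n" and w: "\<omega> \<in> Zs (c + inverse (real (Suc n)))"
  then have le: "inverse (real (Suc n)) \<le> inverse (real (Suc m))" by (intro inv_mono)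
  have sp: "\<omega> \<in> space J" and z: "Zf (fst (snd \<omega>)) \<le> c + inverse (real (Suc n))" using w unfolding Zs_iff by auto
  have "Zf (fst (snd \<omega>)) \<le> c + inverse (real (Suc m))" using z le by linarith
  then show "\<omega> \<in> Zs (c + inverse (real (Suc m)))" using sp unfolding Zs_iff by blast
qed

lemma Zs_incseq: "incseq (\<lambda>n. Zs (c - inverse (real (Suc n))))"
  unfolding incseq_def
proof (intro allI impI subsetI)
  fix m n :: nat and \<omega> assume "m \<le> n" and w: "\<omega> \<in> Zs (c - inverse (real (Suc m)))"
  then have le: "inverse (real (Suc n)) \<le> inverse (real (Suc m))" by (intro inv_mono)
  have sp: "\<omega> \<in> space J" and z: "Zf (fst (snd \<omega>)) \<le> c - inverse (real (Suc m))" using w unfolding Zs_iff by auto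
  have "Zf (fst (snd \<omega>)) \<le> c - inverse (real (Suc n))" using z le by linarith
  then show "\<omega> \<in> Zs (c - inverse (real (Suc n)))" using sp unfolding Zs_iff by blast
qed

lemma Zs_Inter: "(\<Inter>n. Zs (c + inverse (real (Suc n)))) = Zs c"
proof
  show "Zs c \<subseteq> (\<Inter>n. Zs (c + inverse (real (Suc n))))"
  proof
    fix \<omega> assume w: "\<omega> \<in> Zs c"
    show "\<omega> \<in> (\<Inter>n. Zs (c + inverse (real (Suc n))))"
    proof
      fix n :: nat
      have ip: "0 < inverse (real (Suc n))" by (rule positive_imp_inverse_positive) simp
      have sp: "\<omega> \<in> space J" and z: "Zf (fst (snd \<omega>)) \<le> c" using w unfolding Zs_iff by auto
      have "Zf (fst (snd \<omega>)) \<le> c + inverse (real (Suc n))" using z ip by linarith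
      then show "\<omega> \<in> Zs (c + inverse (real (Suc n)))" using sp unfolding Zs_iff by blast
    qed
  qed
  show "(\<Inter>n. Zs (c + inverse (real (Suc n)))) \<subseteq> Zs c"
  proof
    fix \<omega> assume a: "\<omega> \<in> (\<Inter>n. Zs (c + inverse (real (Suc n))))"
    then have sp: "\<omega> \<in> space J" by (auto simp: Zs_iff)
    show "\<omega> \<in> Zs c"
    proof (rule ccontr)
      assume "\<omega> \<notin> Zs c"
      then have "0 < Zf (fst (snd \<omega>)) - c" using sp unfolding Zs_iff by auto
      then obtain n where n: "inverse (real (Suc n)) < Zf (fst (snd \<omega>)) - c"
        using reals_Archimedean by blast
      have "\<omega> \<in> Zs (c + inverse (real (Suc n)))" using a by blast
      then have "Zf (fst (snd \<omega>)) \<le> c + inverse (real (Suc n))" unfolding Zs_iff by blast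
      then show False using n by linarith
    qed
  qed
qed

lemma Zs_Union: "(\<Union>n. Zs (c - inverse (real (Suc n)))) = Zl c"
proof
  show "(\<Union>n. Zs (c - inverse (real (Suc n)))) \<subseteq> Zl c"
  proof
    fix \<omega> assume "\<omega> \<in> (\<Union>n. Zs (c - inverse (real (Suc n))))"
    then obtain n where w: "\<omega> \<in> Zs (c - inverse (real (Suc n)))" by auto
    have ip: "0 < inverse (real (Suc n))" by (rule positive_imp_inverse_positive) simp
    have sp: "\<omega> \<in> space J" and le: "Zf (fst (snd \<omega>)) \<le> c - inverse (real (Suc n))"
      using w unfolding Zs_iff by auto
    have "Zf (fst (snd \<omega>)) < c" using le ip by linarith
    then show "\<omega> \<in> Zl c" unfolding Zl_iff using sp by blast
  qed
  show "Zl c \<subseteq> (\<Union>n. Zs (c - inverse (real (Suc n))))"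
  proof
    fix \<omega> assume a: "\<omega> \<in> Zl c"
    then have sp: "\<omega> \<in> space J" and z: "Zf (fst (snd \<omega>)) < c" unfolding Zl_iff by auto
    then have "0 < c - Zf (fst (snd \<omega>))" by simp
    then obtain n where n: "inverse (real (Suc n)) < c - Zf (fst (snd \<omega>))"
      using reals_Archimedean by blast
    have "Zf (fst (snd \<omega>)) \<le> c - inverse (real (Suc n))" using n by linarith
    then have "\<omega> \<in> Zs (c - inverse (real (Suc n)))" using sp unfolding Zs_iff by blast
    then show "\<omega> \<in> (\<Union>n. Zs (c - inverse (real (Suc n))))" by blast
  qed
qed

lemma quantile:
  assumes s0: "0 < s" "s \<le> 1"
  shows "\<exists>c. 0 \<le> c \<and> c \<le> 1/2 \<and> measure J (Zl c) \<le> s \<and> s \<le> measure J (Zs c)"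
proof -
  define Psi where "Psi t = measure J (Zs t)" for t
  define S where "S = {t. s \<le> Psi t}"
  define c where "c = Inf S"
  have half: "1/2 \<in> S"
  proof -
    have "Zs (1/2) = space J" unfolding Zs_def using Z_half by auto
    then have "Psi (1/2) = 1" unfolding Psi_def by (simp add: PJ.prob_space)
    then show ?thesis unfolding S_def using s0 by simp
  qed
  have mono: "Psi t \<le> Psi t'" if tt: "t \<le> t'" for t t'
  proof -
    have "Zs t \<subseteq> Zs t'" unfolding Zs_def using tt by auto
    then show ?thesis unfolding Psi_def by (intro PJ.finite_measure_mono) auto
  qed
  have pos: "0 \<le> t" if tS: "t \<in> S" for t
  proof (rule ccontr)
    assume "\<not> 0 \<le> t"
    then have "Zs t = {}" unfolding Zs_def using Z01 spJ by force
    then have "Psi t = 0" unfolding Psi_def by simp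
    then show False using tS s0 unfolding S_def by simp
  qed
  have bdd: "bdd_below S" unfolding bdd_below_def using pos by auto
  have Sne: "S \<noteq> {}" using half by auto
  have c_le: "c \<le> 1/2" unfolding c_def by (rule cInf_lower[OF half bdd])
  have c_ge: "0 \<le> c" unfolding c_def by (rule cInf_greatest[OF Sne]) (use pos in auto)
  have inS: "t \<in> S" if ct: "c < t" for t
  proof -
    have "Inf S < t" using ct unfolding c_def .
    then obtain x where "x \<in> S" "x < t" using cInf_less_iff[OF Sne bdd] by auto
    then show ?thesis using mono[of x t] unfolding S_def by auto
  qed
  have notS: "t \<notin> S" if ct: "t < c" for t
    using ct cInf_lower[OF _ bdd, of t] unfolding c_def by auto
  have Psic: "s \<le> measure J (Zs c)"
  proof (rule LIMSEQ_le_const)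
    show "(\<lambda>n. measure J (Zs (c + inverse (real (Suc n))))) \<longlonglongrightarrow> measure J (Zs c)"
    proof -
      have r: "range (\<lambda>n. Zs (c + inverse (real (Suc n)))) \<subseteq> sets J" using Zsets(1) by blast
      show ?thesis using PJ.finite_Lim_measure_decseq[OF r Zs_decseq[of c]] unfolding Zs_Inter .
    qed
    show "\<exists>N. \<forall>n\<ge>N. s \<le> measure J (Zs (c + inverse (real (Suc n))))"
    proof (intro exI allI impI)
      fix n :: nat
      have ip: "0 < inverse (real (Suc n))" by (rule positive_imp_inverse_positive) simp
      then have "c < c + inverse (real (Suc n))" by linarith
      then have "c + inverse (real (Suc n)) \<in> S" by (rule inS)
      then show "s \<le> measure J (Zs (c + inverse (real (Suc n))))" unfolding S_def Psi_def by simp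
    qed
  qed
  have Phic: "measure J (Zl c) \<le> s"
  proof (rule LIMSEQ_le_const2)
    show "(\<lambda>n. measure J (Zs (c - inverse (real (Suc n))))) \<longlonglongrightarrow> measure J (Zl c)"
    proof -
      have r: "range (\<lambda>n. Zs (c - inverse (real (Suc n)))) \<subseteq> sets J" using Zsets(1) by blast
      show ?thesis using PJ.finite_Lim_measure_incseq[OF r Zs_incseq[of c]] unfolding Zs_Union .
    qed
    show "\<exists>N. \<forall>n\<ge>N. measure J (Zs (c - inverse (real (Suc n)))) \<le> s"
    proof (intro exI allI impI)
      fix n :: nat
      have ip: "0 < inverse (real (Suc n))" by (rule positive_imp_inverse_positive) simp
      then have "c - inverse (real (Suc n)) < c" by linarith
      then have "c - inverse (real (Suc n)) \<notin> S" by (rule notS)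
      then have "\<not> s \<le> Psi (c - inverse (real (Suc n)))" unfolding S_def by simp
      then show "measure J (Zs (c - inverse (real (Suc n)))) \<le> s" unfolding Psi_def by linarith
    qed
  qed
  show ?thesis using c_ge c_le Psic Phic by blast
qed

lemma pw_g1: fixes e c :: real
  assumes "c < e \<and> e < 1 - c" shows "\<not> (min e (1 - e) < c \<or> (min e (1 - e) = c \<and> P))"
  using assms by (auto simp: min_def)

lemma pw_g2: fixes e c :: real
  assumes "\<not> (min e (1 - e) < c \<or> (min e (1 - e) = c \<and> P))" shows "c \<le> e \<and> e \<le> 1 - c"
  using assms by (auto simp: min_def split: if_splits)

lemma exists_oracle:
  assumes g0: "0 \<le> \<gamma>" and g1: "\<gamma> < 1"
  shows "\<exists>\<tau> g. is_oracle M p1 p2 f1 f2 \<gamma> \<tau> g"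
proof -
  define s where "s = 1 - \<gamma>"
  have s0: "0 < s" "s \<le> 1" using g0 g1 by (auto simp: s_def)
  obtain c where c_ge: "0 \<le> c" and c_le: "c \<le> 1/2" and Phic: "measure J (Zl c) \<le> s"
    and Psic: "s \<le> measure J (Zs c)"
    using quantile[OF s0] by blast
  define Q where "Q = measure J (Ze c)"
  define Phi where "Phi = measure J (Zl c)"
  have PsiQ: "measure J (Zs c) = Phi + Q"
  proof -
    have "Zs c = Zl c \<union> Ze c" "Zl c \<inter> Ze c = {}" unfolding Zs_def Zl_def Ze_def by auto
    then show ?thesis unfolding Phi_def Q_def by (simp add: PJ.finite_measure_Union)
  qed
  have Q0: "0 \<le> Q" unfolding Q_def by simp
  define a where "a = (s - Phi) / Q"
  have a01: "0 \<le> a" "a \<le> 1" and aQ: "Phi + a * Q = s"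
  proof -
    have "0 \<le> a \<and> a \<le> 1 \<and> Phi + a * Q = s"
    proof (cases "Q = 0")
      case True
      then show ?thesis using Psic Phic PsiQ unfolding a_def Phi_def by simp
    next
      case False
      then have Qp: "0 < Q" using Q0 by simp
      have "s - Phi \<le> Q" using Psic PsiQ by simp
      moreover have "0 \<le> s - Phi" using Phic unfolding Phi_def by simp
      ultimately show ?thesis using Qp unfolding a_def by (auto simp: divide_le_eq_1)
    qed
    then show "0 \<le> a" "a \<le> 1" "Phi + a * Q = s" by auto
  qed
  define R where "R = {\<omega> \<in> space J. Zf (fst (snd \<omega>)) = c \<and> snd (snd \<omega>) \<le> a}"
  define Bc where "Bc = {x \<in> space M. Zf x = c}"
  have Bc_sets[measurable]: "Bc \<in> sets M" unfolding Bc_def by measurable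
  have RQ: "measure J R = a * Q"
  proof -
    have "R = {\<omega> \<in> space J. fst (snd \<omega>) \<in> Bc \<and> snd (snd \<omega>) \<in> {..a}}"
      unfolding R_def Bc_def using spJ by auto
    then have e1: "emeasure J R = (\<integral>\<^sup>+ x. ennreal (h x * indicator Bc x) \<partial>M) * ennreal a"
      using rect[OF Bc_sets, of "{..a}"] a01 by (simp add: Int_commute)
    have "Ze c = {\<omega> \<in> space J. fst (snd \<omega>) \<in> Bc \<and> snd (snd \<omega>) \<in> UNIV}"
      unfolding Ze_def Bc_def using spJ by auto
    then have e2: "emeasure J (Ze c) = (\<integral>\<^sup>+ x. ennreal (h x * indicator Bc x) \<partial>M)"
      using rect[OF Bc_sets, of UNIV] by simp
    have "measure J R = enn2real (emeasure J (Ze c) * ennreal a)"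
      unfolding measure_def e1 e2 ..
    also have "\<dots> = Q * a" unfolding Q_def measure_def using a01 by (simp add: enn2real_mult)
    finally show ?thesis by simp
  qed
  have R_sets: "R \<in> sets J" unfolding R_def by measurable
  define g where "g x u = (if Zf x < c \<or> (Zf x = c \<and> u \<le> a) then (if p2 * f2 x \<le> p1 * f1 x then 1 else 2) else (0::nat))" for x u
  have clg: "classifier M g"
    unfolding classifier_def
  proof
    show "(\<lambda>(x, u). g x u) \<in> M \<Otimes>\<^sub>M borel \<rightarrow>\<^sub>M count_space UNIV"
      unfolding g_def by measurable
    show "\<forall>x u. g x u \<in> {0, 1, 2}" unfolding g_def by auto
  qed
  have DDg: "DD g = Zl c \<union> R"
  proof -
    have "g x u \<noteq> 0 \<longleftrightarrow> (Zf x < c \<or> (Zf x = c \<and> u \<le> a))" for x u unfolding g_def by auto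
    then show ?thesis unfolding DD_def Zl_def R_def by auto
  qed
  have "measure J (DD g) = s"
  proof -
    have "Zl c \<inter> R = {}" unfolding Zl_def R_def by auto
    then have "measure J (DD g) = Phi + a * Q" unfolding DDg Phi_def RQ[symmetric]
      using R_sets by (simp add: PJ.finite_measure_Union)
    then show ?thesis using aQ by simp
  qed
  then have indg: "indecision_prob J g = \<gamma>" using measure_DD[OF clg] unfolding s_def by simp
  have pw1: "g x u = 0" if "c < et x \<and> et x < 1 - c" for x u
  proof -
    have "\<not> (min (et x) (1 - et x) < c \<or> (min (et x) (1 - et x) = c \<and> u \<le> a))" using that by (rule pw_g1)
    then show "g x u = 0" unfolding g_def Zfun_def by simp
  qed
  have pw2: "c \<le> et x \<and> et x \<le> 1 - c" if "g x u = 0" for x u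
  proof -
    have "\<not> (min (et x) (1 - et x) < c \<or> (min (et x) (1 - et x) = c \<and> u \<le> a))"
      using that unfolding g_def Zfun_def by (auto split: if_splits)
    then show ?thesis by (rule pw_g2)
  qed
  have pw3: "p1 * f1 x \<ge> p2 * f2 x" if "g x u = 1" for x u
    using that unfolding g_def by (auto split: if_splits)
  have pw4: "p2 * f2 x \<ge> p1 * f1 x" if "g x u = 2" for x u
    using that unfolding g_def by (auto split: if_splits)
  have pw: "(c < et x \<and> et x < 1 - c \<longrightarrow> g x u = 0) \<and>
        (g x u = 0 \<longrightarrow> c \<le> et x \<and> et x \<le> 1 - c) \<and>
        (g x u = 1 \<longrightarrow> p1 * f1 x \<ge> p2 * f2 x) \<and>
        (g x u = 2 \<longrightarrow> p2 * f2 x \<ge> p1 * f1 x)" for x u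
    using pw1 pw2 pw3 pw4 by blast
  have "is_oracle M p1 p2 f1 f2 \<gamma> (1 - c) g"
    unfolding is_oracle_def
  proof (intro conjI)
    show "classifier M g" by (rule clg)
    show "1/2 \<le> 1 - c" "1 - c \<le> 1" using c_le c_ge by auto
    show "indecision_prob J g = \<gamma>" by (rule indg)
    show "AE (i, x, u) in J.
        (1 - (1 - c) < et x \<and> et x < 1 - c \<longrightarrow> g x u = 0) \<and>
        (g x u = 0 \<longrightarrow> 1 - (1 - c) \<le> et x \<and> et x \<le> 1 - c) \<and>
        (g x u = 1 \<longrightarrow> p1 * f1 x \<ge> p2 * f2 x) \<and>
        (g x u = 2 \<longrightarrow> p2 * f2 x \<ge> p1 * f1 x)"
      by (rule AE_I2) (use pw in \<open>simp split: prod.splits\<close>)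
  qed
  then show ?thesis by blast
qed

definition "og \<gamma> = (SOME p. is_oracle M p1 p2 f1 f2 \<gamma> (fst p) (snd p))"
definition "AA \<gamma> = A (snd (og \<gamma>))"
definition "cc \<gamma> = 1 - fst (og \<gamma>)"

lemma og: assumes "0 \<le> \<gamma>" "\<gamma> < 1"
  shows "is_oracle M p1 p2 f1 f2 \<gamma> (fst (og \<gamma>)) (snd (og \<gamma>))"
proof -
  obtain \<tau> g where "is_oracle M p1 p2 f1 f2 \<gamma> \<tau> g" using exists_oracle[OF assms] by blast
  then have "\<exists>p. is_oracle M p1 p2 f1 f2 \<gamma> (fst p) (snd p)" by (intro exI[of _ "(\<tau>, g)"]) simp
  then show ?thesis unfolding og_def by (rule someI_ex)
qed

lemma og_facts: assumes "0 \<le> \<gamma>" "\<gamma> < 1"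
  shows "Rrisk M p1 p2 f1 f2 \<gamma> = AA \<gamma> / (1 - \<gamma>)" "0 \<le> cc \<gamma>" "cc \<gamma> \<le> 1/2"
    "classifier M (snd (og \<gamma>))" "measure J (DD (snd (og \<gamma>))) = 1 - \<gamma>"
    "AA \<gamma> \<le> cc \<gamma> * (1 - \<gamma>)"
proof -
  note o = og[OF assms]
  show "Rrisk M p1 p2 f1 f2 \<gamma> = AA \<gamma> / (1 - \<gamma>)"
    using part1[OF o assms(2)] unfolding AA_def by simp
  show "0 \<le> cc \<gamma>" "cc \<gamma> \<le> 1/2" using o unfolding is_oracle_def cc_def by auto
  show cl: "classifier M (snd (og \<gamma>))" using o unfolding is_oracle_def by auto
  show P: "measure J (DD (snd (og \<gamma>))) = 1 - \<gamma>"
    using o measure_DD[OF cl] unfolding is_oracle_def by auto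
  have "A (snd (og \<gamma>)) - (1 - fst (og \<gamma>)) * measure J (DD (snd (og \<gamma>))) \<le> A (\<lambda>x u. 0::nat) - (1 - fst (og \<gamma>)) * measure J (DD (\<lambda>x u. 0::nat))"
    by (rule lagrange[OF o zero_classifier(1)])
  then show "AA \<gamma> \<le> cc \<gamma> * (1 - \<gamma>)" unfolding zero_classifier AA_def cc_def P by simp
qed

lemma lag2: assumes "0 \<le> a" "a < 1" "0 \<le> b" "b < 1"
  shows "AA a - cc a * (1 - a) \<le> AA b - cc a * (1 - b)"
  using lagrange[OF og[OF assms(1,2)] og_facts(4)[OF assms(3,4)]] og_facts(5)[OF assms(1,2)] og_facts(5)[OF assms(3,4)]
  unfolding AA_def cc_def by simp

lemma half_bound: fixes c t :: real assumes "0 \<le> c" "c \<le> 1/2" shows "c * t \<le> 1/2 * \<bar>t\<bar>"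
proof -
  have "c * t \<le> c * \<bar>t\<bar>" by (rule mult_left_mono) (use assms in auto)
  also have "\<dots> \<le> 1/2 * \<bar>t\<bar>" by (rule mult_right_mono) (use assms in auto)
  finally show ?thesis .
qed

lemma lin_help: fixes x y z w v t :: real
  assumes "x - z \<le> y - w" "z - w = v" "v \<le> t" shows "x - y \<le> t"
  using assms by linarith

lemma AA_lip: assumes "0 \<le> a" "a < 1" "0 \<le> b" "b < 1"
  shows "\<bar>AA a - AA b\<bar> \<le> 1/2 * \<bar>a - b\<bar>"
proof -
  have l1: "AA a - cc a * (1 - a) \<le> AA b - cc a * (1 - b)" by (rule lag2) (use assms in auto)
  have l2: "AA b - cc b * (1 - b) \<le> AA a - cc b * (1 - a)" by (rule lag2) (use assms in auto)
  have h1: "cc a * (b - a) \<le> 1/2 * \<bar>b - a\<bar>"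
    by (rule half_bound) (use og_facts(2,3)[OF assms(1,2)] in auto)
  have h2: "cc b * (a - b) \<le> 1/2 * \<bar>a - b\<bar>"
    by (rule half_bound) (use og_facts(2,3)[OF assms(3,4)] in auto)
  have e1: "cc a * (1 - a) - cc a * (1 - b) = cc a * (b - a)" by (simp add: algebra_simps)
  have e2: "cc b * (1 - b) - cc b * (1 - a) = cc b * (a - b)" by (simp add: algebra_simps)
  have ab: "\<bar>b - a\<bar> = \<bar>a - b\<bar>" by simp
  have h1': "cc a * (b - a) \<le> 1/2 * \<bar>a - b\<bar>" using h1 unfolding ab .
  have u1: "AA a - AA b \<le> 1/2 * \<bar>a - b\<bar>" by (rule lin_help[OF l1 e1 h1'])
  have u2: "AA b - AA a \<le> 1/2 * \<bar>a - b\<bar>" by (rule lin_help[OF l2 e2 h2])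
  show ?thesis using u1 u2 by (intro abs_leI) auto
qed

lemma R_mono: assumes "0 \<le> a" "a \<le> b" "b < 1"
  shows "Rrisk M p1 p2 f1 f2 b \<le> Rrisk M p1 p2 f1 f2 a"
proof -
  have a1: "a < 1" and b0: "0 \<le> b" using assms by auto
  define sa where "sa = 1 - a"
  define sb where "sb = 1 - b"
  have sp: "0 < sb" "sb \<le> sa" using assms by (auto simp: sa_def sb_def)
  have l: "AA b - cc b * sb \<le> AA a - cc b * sa"
    using lag2[OF b0 assms(3) assms(1) a1] unfolding sa_def sb_def .
  have ub: "AA b \<le> cc b * sb" using og_facts(6)[OF b0 assms(3)] unfolding sb_def .
  have h1: "(AA b + cc b * (sa - sb)) * sb \<le> AA a * sb"
    by (rule mult_right_mono) (use l sp in \<open>auto simp: algebra_simps\<close>)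
  have h2: "AA b * (sa - sb) \<le> cc b * sb * (sa - sb)"
    by (rule mult_right_mono) (use ub sp in auto)
  have e1: "(AA b + cc b * (sa - sb)) * sb = AA b * sb + cc b * sb * (sa - sb)" by (simp add: algebra_simps)
  have e2: "AA b * sa = AA b * sb + AA b * (sa - sb)" by (simp add: algebra_simps)
  have key: "AA b * sa \<le> AA a * sb" using h1 h2 e1 e2 by linarith
  have sa0: "0 < sa" using sp by linarith
  have "AA b / sb \<le> AA a / sa" using key sa0 sp(1) by (simp add: field_simps)
  then show ?thesis using og_facts(1)[OF b0 assms(3)] og_facts(1)[OF assms(1) a1] unfolding sa_def sb_def by simp
qed

lemma R_cont: "continuous_on {0..<1} (Rrisk M p1 p2 f1 f2)"
proof -
  have "(1/2)-lipschitz_on {0..<1} AA"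
  proof (rule lipschitz_onI)
    fix x y :: real assume "x \<in> {0..<1}" "y \<in> {0..<1}"
    then show "dist (AA x) (AA y) \<le> 1/2 * dist x y" using AA_lip[of x y] by (simp add: dist_real_def)
  qed simp
  then have c1: "continuous_on {0..<1} AA" by (rule lipschitz_on_continuous_on)
  have c2: "continuous_on {0..<1} (\<lambda>\<gamma>. AA \<gamma> / (1 - \<gamma>))"
    by (intro continuous_intros c1) auto
  show ?thesis
    using c2 og_facts(1) by (subst continuous_on_cong[OF refl]) auto
qed

end

theorem proposition1:
  fixes M :: "'a measure" and f1 f2 :: "'a \<Rightarrow> real" and p1 p2 :: real
  assumes "sigma_finite_measure M"
    and "f1 \<in> borel_measurable M" and "f2 \<in> borel_measurable M"
    and "\<And>x. x \<in> space M \<Longrightarrow> 0 \<le> f1 x" and "\<And>x. x \<in> space M \<Longrightarrow> 0 \<le> f2 x"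
    and "(\<integral>\<^sup>+ x. ennreal (f1 x) \<partial>M) = 1" and "(\<integral>\<^sup>+ x. ennreal (f2 x) \<partial>M) = 1"
    and "density M (\<lambda>x. ennreal (f1 x)) \<noteq> density M (\<lambda>x. ennreal (f2 x))"
    and "0 < p1" and "0 < p2" and "p1 + p2 = 1"
  shows "(\<forall>\<gamma> \<tau> g. 0 \<le> \<gamma> \<and> \<gamma> < 1 \<and> is_oracle M p1 p2 f1 f2 \<gamma> \<tau> g \<longrightarrow>
            Rrisk M p1 p2 f1 f2 \<gamma> = cond_exp_Z M p1 p2 f1 f2 g)
       \<and> continuous_on {0..<1} (Rrisk M p1 p2 f1 f2)
       \<and> (\<forall>a b. 0 \<le> a \<and> a \<le> b \<and> b < 1 \<longrightarrow> Rrisk M p1 p2 f1 f2 b \<le> Rrisk M p1 p2 f1 f2 a)"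
proof -
  interpret S M f1 f2 p1 p2
    by (rule S.intro) (fact assms)+
  show ?thesis
  proof (intro conjI allI impI)
    fix \<gamma> \<tau> g assume "0 \<le> \<gamma> \<and> \<gamma> < 1 \<and> is_oracle M p1 p2 f1 f2 \<gamma> \<tau> g"
    then show "Rrisk M p1 p2 f1 f2 \<gamma> = cond_exp_Z M p1 p2 f1 f2 g" using part1(1) by blast
  next
    show "continuous_on {0..<1} (Rrisk M p1 p2 f1 f2)" by (rule R_cont)
  next
    fix a b :: real assume "0 \<le> a \<and> a \<le> b \<and> b < 1"
    then show "Rrisk M p1 p2 f1 f2 b \<le> Rrisk M p1 p2 f1 f2 a" using R_mono by blast
  qed
qed

end
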